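(* For $n\ge 2$ agents with values i.i.d. from any (possibly irregular) distribution with revenue curve $R$, and any quantile $q\le 1-1/n$, there exists an integer $1\le k\le (1-q)n$ such that the revenue of the highest-$k$-bids-win auction is at least a quarter of $nR(q)$, i.e., $nP_k\ge \tfrac14\, nR(q)$.
   Context: Values are i.i.d. from a continuous distribution $F$ on $[0,1]$; with quantile $q=F(v)$ and $v(q)=F^{-1}(q)$, the revenue curve $R(q)=v(q)(1-q)$ is the revenue of posting price $v(q)$ to a single agent. $P_k$ is the per-agent Bayes–Nash equilibrium revenue of the $n$-agent highest-$k$-bids-win auction (total revenue $nP_k$). *)

theory Defs
  imports "HOL-Analysis.Analysis"
begin

definition cont_dist_01 :: "(real \<Rightarrow> real) \<Rightarrow> bool" where
  "cont_dist_01 F \<longleftrightarrow> continuous_on UNIV F \<and> mono F \<and>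
     (\<forall>x\<le>0. F x = 0) \<and> (\<forall>x\<ge>1. F x = 1)"

text \<open>Quantile function v(q) = F^{-1}(q) (largest value with F v = q; F is continuous).\<close>
definition value_of_quantile :: "(real \<Rightarrow> real) \<Rightarrow> real \<Rightarrow> real" where
  "value_of_quantile F q = Sup {x \<in> {0..1}. F x \<le> q}"

definition revenue_curve :: "(real \<Rightarrow> real) \<Rightarrow> real \<Rightarrow> real" where
  "revenue_curve F q = value_of_quantile F q * (1 - q)"

text \<open>Interim allocation rule of the n-agent highest-k-bids-win auction for an agent at
  quantile q: probability that at most k-1 of the other n-1 agents have higher quantile.\<close>
definition alloc_topk :: "nat \<Rightarrow> nat \<Rightarrow> real \<Rightarrow> real" where
  "alloc_topk n k q = (\<Sum>j<k. real ((n - 1) choose j) * (1 - q) ^ j * q ^ (n - 1 - j))"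

text \<open>Per-agent Bayes-Nash equilibrium revenue P_k (revenue equivalence:
  expected marginal revenue of the allocation rule, P = integral of R(q) x'(q) dq).\<close>
definition per_agent_rev :: "(real \<Rightarrow> real) \<Rightarrow> nat \<Rightarrow> nat \<Rightarrow> real" where
  "per_agent_rev F n k = integral {0..1} (\<lambda>q. revenue_curve F q * deriv (alloc_topk n k) q)"

end

theory Submission
  imports Defs
begin


definition bs :: "nat \<Rightarrow> nat \<Rightarrow> real \<Rightarrow> real" where
  "bs N k p = (\<Sum>j<k. real (N choose j) * p ^ j * (1 - p) ^ (N - j))"

lemma bs_deriv:
  assumes "j < N"
  shows "(bs N (Suc j) has_real_derivative
            - (real N * real ((N - 1) choose j) * p ^ j * (1 - p) ^ (N - 1 - j))) (at p)"
  using assms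
proof (induction j)
  case 0
  have "((\<lambda>p. (1 - p) ^ N) has_real_derivative real N * (1 - p) ^ (N - 1) * (-1)) (at p)"
    by (auto intro!: derivative_eq_intros)
  then show ?case unfolding bs_def by simp
next
  case (Suc j)
  have IH: "(bs N (Suc j) has_real_derivative
            - (real N * real ((N - 1) choose j) * p ^ j * (1 - p) ^ (N - 1 - j))) (at p)"
    using Suc by simp
  have T: "((\<lambda>p. real (N choose Suc j) * p ^ Suc j * (1 - p) ^ (N - Suc j)) has_real_derivative
     real (N choose Suc j) * (real (Suc j) * p ^ j * (1 - p) ^ (N - Suc j)
        - p ^ Suc j * (real (N - Suc j) * (1 - p) ^ (N - Suc j - 1)))) (at p)"
  proof -
    have d1: "((\<lambda>p. p ^ Suc j) has_real_derivative real (Suc j) * p ^ j) (at p)"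
      using DERIV_pow[of "Suc j" p] by simp
    have d2: "((\<lambda>p. (1 - p) ^ (N - Suc j)) has_real_derivative
                 real (N - Suc j) * (1 - p) ^ (N - Suc j - 1) * (-1)) (at p)"
    proof -
      have "((\<lambda>p. 1 - p) has_real_derivative -1) (at p)"
        by (auto intro!: derivative_eq_intros)
      from DERIV_power[OF this, of "N - Suc j"] show ?thesis by (simp add: mult_ac)
    qed
    have "((\<lambda>p. p ^ Suc j * (1 - p) ^ (N - Suc j)) has_real_derivative
          real (Suc j) * p ^ j * (1 - p) ^ (N - Suc j) + real (N - Suc j) * (1 - p) ^ (N - Suc j - 1) * (-1) * p ^ Suc j) (at p)"
      using DERIV_mult[OF d1 d2] by (simp add: mult_ac)
    from DERIV_cmult[OF this, of "real (N choose Suc j)"] show ?thesis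
      by (simp add: algebra_simps)
  qed
  have e1: "real (N choose Suc j) * real (Suc j) = real N * real ((N - 1) choose j)"
    using binomial_absorption[of j N] by (metis of_nat_mult mult.commute)
  have e2: "real (N choose Suc j) * real (N - Suc j) = real N * real ((N - 1) choose Suc j)"
    using binomial_absorb_comp[of N "Suc j"] by (metis of_nat_mult mult.commute)
  have ex: "N - 1 - j = Suc (N - 1 - Suc j)" "N - Suc j = N - 1 - j" "N - Suc j - 1 = N - 1 - Suc j"
    using Suc.prems by auto
  have "(bs N (Suc (Suc j))) = (\<lambda>p. bs N (Suc j) p + real (N choose Suc j) * p ^ Suc j * (1 - p) ^ (N - Suc j))"
    by (rule ext) (simp add: bs_def del: power_Suc)
  moreover have "((\<lambda>p. bs N (Suc j) p + real (N choose Suc j) * p ^ Suc j * (1 - p) ^ (N - Suc j))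
     has_real_derivative
      - (real N * real ((N - 1) choose j) * p ^ j * (1 - p) ^ (N - 1 - j)) +
      real (N choose Suc j) * (real (Suc j) * p ^ j * (1 - p) ^ (N - Suc j)
        - p ^ Suc j * (real (N - Suc j) * (1 - p) ^ (N - Suc j - 1)))) (at p)"
    by (rule DERIV_add[OF IH T])
  moreover have "- (real N * real ((N - 1) choose j) * p ^ j * (1 - p) ^ (N - 1 - j)) +
      real (N choose Suc j) * (real (Suc j) * p ^ j * (1 - p) ^ (N - Suc j)
        - p ^ Suc j * (real (N - Suc j) * (1 - p) ^ (N - Suc j - 1)))
     = - (real N * real ((N - 1) choose Suc j) * p ^ Suc j * (1 - p) ^ (N - 1 - Suc j))"
  proof -
    have A: "real (N choose Suc j) * (real (Suc j) * p ^ j * (1 - p) ^ (N - Suc j))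
         = real N * real ((N - 1) choose j) * p ^ j * (1 - p) ^ (N - 1 - j)"
    proof -
      have "real (N choose Suc j) * (real (Suc j) * p ^ j * (1 - p) ^ (N - Suc j))
          = (real (N choose Suc j) * real (Suc j)) * (p ^ j * (1 - p) ^ (N - 1 - j))"
        unfolding ex(2) by (simp only: mult_ac)
      also have "\<dots> = real N * real ((N - 1) choose j) * p ^ j * (1 - p) ^ (N - 1 - j)"
        unfolding e1 by (simp only: mult_ac)
      finally show ?thesis .
    qed
    have B: "real (N choose Suc j) * (p ^ Suc j * (real (N - Suc j) * (1 - p) ^ (N - Suc j - 1)))
         = real N * real ((N - 1) choose Suc j) * p ^ Suc j * (1 - p) ^ (N - 1 - Suc j)"
    proof -
      have "real (N choose Suc j) * (p ^ Suc j * (real (N - Suc j) * (1 - p) ^ (N - Suc j - 1)))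
          = (real (N choose Suc j) * real (N - Suc j)) * (p ^ Suc j * (1 - p) ^ (N - 1 - Suc j))"
        unfolding ex(3) by (simp only: mult_ac)
      also have "\<dots> = real N * real ((N - 1) choose Suc j) * p ^ Suc j * (1 - p) ^ (N - 1 - Suc j)"
        unfolding e2 by (simp only: mult_ac)
      finally show ?thesis .
    qed
    show ?thesis unfolding right_diff_distrib A B by simp
  qed
  ultimately show ?case by simp
qed

lemma e_ge: "2.718 \<le> exp (1::real)"
  using e_approx_32 by (simp add: abs_if split: if_split_asm)

lemma exp_nat_pow: "exp (real m * x) = exp x ^ m"
  by (simp add: exp_of_nat_mult)

lemma one_minus_le_exp3:
  fixes x :: real
  assumes "0 \<le> x" "x \<le> 1"
  shows "1 - x \<le> exp (-(x + x^2/2 + x^3/3))"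
proof -
  define f where "f y = exp (-(y + y^2/2 + y^3/3)) - (1 - y)" for y :: real
  have d: "(f has_real_derivative 1 - (1 + y + y^2) * exp (-(y + y^2/2 + y^3/3))) (at y)" for y
    unfolding f_def by (auto intro!: derivative_eq_intros simp: power2_eq_square power3_eq_cube algebra_simps)
  have pos: "0 \<le> 1 - (1 + y + y^2) * exp (-(y + y^2/2 + y^3/3))" if "0 \<le> y" for y :: real
  proof -
    define z where "z = y + y^2/2 + y^3/3"
    have z0: "0 \<le> z" using that by (simp add: z_def)
    have "1 + z + z^2/2 \<le> exp z"
      using exp_lower_Taylor_quadratic[OF z0] by simp
    moreover have "1 + y + y^2 \<le> 1 + z + z^2/2"
    proof -
      have "y^2/2 \<le> z^2/2" using that z0 unfolding z_def
        by (intro divide_right_mono power_mono) auto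
      moreover have "0 \<le> y^3" using that by simp
      ultimately show ?thesis unfolding z_def by linarith
    qed
    ultimately have "1 + y + y^2 \<le> exp z" by linarith
    then have "(1 + y + y^2) * exp (-z) \<le> exp z * exp (-z)"
      by (intro mult_right_mono) auto
    then show ?thesis by (simp add: z_def exp_minus field_simps)
  qed
  have "f 0 \<le> f x"
  proof (rule DERIV_nonneg_imp_increasing_open[of 0 x f])
    show "0 \<le> x" by fact
    show "\<exists>y. (f has_real_derivative y) (at z) \<and> 0 \<le> y" if "0 < z" "z < x" for z
      using d pos that by fastforce
    show "continuous_on {0..x} f"
      using d by (meson DERIV_continuous continuous_at_imp_continuous_on)
  qed
  then show ?thesis by (simp add: f_def)
qed

lemma pow_le_exp3:
  fixes x :: real
  assumes "0 \<le> x" "x \<le> 1"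
  shows "(1 - x) ^ m \<le> exp (- (real m * (x + x^2/2 + x^3/3)))"
proof -
  have "(1 - x) ^ m \<le> exp (-(x + x^2/2 + x^3/3)) ^ m"
    using one_minus_le_exp3[OF assms] assms by (intro power_mono) auto
  also have "\<dots> = exp (- (real m * (x + x^2/2 + x^3/3)))"
    by (simp add: exp_of_nat_mult[symmetric] algebra_simps)
  finally show ?thesis .
qed

lemma pow_le_exp1:
  fixes x :: real
  shows "0 \<le> x \<Longrightarrow> x \<le> 1 \<Longrightarrow> (1 - x) ^ m \<le> exp (- (real m * x))"
proof -
  assume a: "0 \<le> x" "x \<le> 1"
  have "(1 - x) ^ m \<le> exp (- x) ^ m"
    using a by (intro power_mono) (auto simp: exp_ge_add_one_self[of "-x", simplified])
  also have "\<dots> = exp (- (real m * x))"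
    by (simp add: exp_of_nat_mult[symmetric])
  finally show ?thesis .
qed

lemma bs_nonneg_terms:
  "0 \<le> p \<Longrightarrow> p \<le> 1 \<Longrightarrow> 0 \<le> real (N choose j) * p ^ j * (1 - p) ^ (N - j)"
  by simp

lemma chernoff:
  fixes p t :: real
  assumes p: "0 \<le> p" "p \<le> 1" and t: "0 < t" "t \<le> 1"
  shows "bs N (Suc k) p \<le> (1/t) ^ k * (1 - p * (1 - t)) ^ N"
proof -
  have "bs N (Suc k) p = (\<Sum>j\<le>k. real (N choose j) * p ^ j * (1 - p) ^ (N - j))"
    unfolding bs_def lessThan_Suc_atMost ..
  also have "\<dots> \<le> (\<Sum>j\<le>k. (1/t) ^ k * (real (N choose j) * (p * t) ^ j * (1 - p) ^ (N - j)))"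
  proof (rule sum_mono)
    fix j assume "j \<in> {..k}"
    then have jk: "j \<le> k" by simp
    have "1 \<le> (1/t) ^ k * t ^ j"
    proof -
      have "t ^ k \<le> t ^ j" using t jk by (intro power_decreasing) auto
      then have "t ^ k / t ^ k \<le> t ^ j / t ^ k" using t by (intro divide_right_mono) auto
      then show ?thesis using t by (simp add: power_divide)
    qed
    then have "real (N choose j) * p ^ j * (1 - p) ^ (N - j) * 1
       \<le> real (N choose j) * p ^ j * (1 - p) ^ (N - j) * ((1/t) ^ k * t ^ j)"
      using p by (intro mult_left_mono) auto
    then show "real (N choose j) * p ^ j * (1 - p) ^ (N - j)
       \<le> (1/t) ^ k * (real (N choose j) * (p * t) ^ j * (1 - p) ^ (N - j))"
      by (simp add: power_mult_distrib mult_ac)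
  qed
  also have "\<dots> = (1/t) ^ k * (\<Sum>j\<le>k. real (N choose j) * (p * t) ^ j * (1 - p) ^ (N - j))"
    by (simp add: sum_distrib_left)
  also have "(\<Sum>j\<le>k. real (N choose j) * (p * t) ^ j * (1 - p) ^ (N - j))
      \<le> (\<Sum>j\<le>N. real (N choose j) * (p * t) ^ j * (1 - p) ^ (N - j))"
  proof -
    have "(\<Sum>j\<le>k. real (N choose j) * (p * t) ^ j * (1 - p) ^ (N - j))
        \<le> (\<Sum>j\<le>max k N. real (N choose j) * (p * t) ^ j * (1 - p) ^ (N - j))"
      using p t by (intro sum_mono2) auto
    also have "\<dots> = (\<Sum>j\<le>N. real (N choose j) * (p * t) ^ j * (1 - p) ^ (N - j))"
      by (rule sum.mono_neutral_right) auto
    finally show ?thesis .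
  qed
  also have "(\<Sum>j\<le>N. real (N choose j) * (p * t) ^ j * (1 - p) ^ (N - j)) = (p * t + (1 - p)) ^ N"
    by (rule binomial_ring[symmetric])
  finally have "bs N (Suc k) p \<le> (1/t) ^ k * (p * t + (1 - p)) ^ N"
    using t by (simp add: mult_left_mono)
  then show ?thesis by (simp add: algebra_simps)
qed




lemma chernoff_exp:
  fixes p t :: real
  assumes p: "0 \<le> p" "p \<le> 1" and t: "0 < t" "t \<le> 1"
  shows "bs N (Suc k) p \<le> (1/t) ^ k * exp (- (real N * p * (1 - t)))"
proof -
  have "bs N (Suc k) p \<le> (1/t) ^ k * (1 - p * (1 - t)) ^ N" by (rule chernoff[OF p t])
  also have "\<dots> \<le> (1/t) ^ k * exp (- (real N * (p * (1 - t))))"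
    using p t by (intro mult_left_mono pow_le_exp1) (auto simp: mult_le_one)
  finally show ?thesis by (simp add: mult_ac)
qed

lemma exp_int_ge: "(2.718::real) ^ m \<le> exp (real m)"
proof -
  have "(2.718::real) ^ m \<le> exp 1 ^ m" using e_ge by (intro power_mono) auto
  then show ?thesis by (simp add: exp_of_nat_mult[symmetric])
qed

lemma Pone: assumes "k < n" shows "bs n (Suc k) 1 = 0"
  unfolding bs_def using assms by (intro sum.neutral) auto

lemma P4: assumes "7 \<le> n" shows "bs n 3 (7 / real n) \<le> 1/8"
proof -
  have n: "real n \<ge> 7" using assms by simp
  have "bs n (Suc 2) (7 / real n) \<le> (1/(1/4)) ^ 2 * exp (- (real n * (7 / real n) * (1 - 1/4)))"
    using n by (intro chernoff_exp) auto
  also have "\<dots> = 16 * exp (- (21/4))" using n by simp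
  also have "\<dots> \<le> 16 * exp (- 5)" by simp
  also have "\<dots> \<le> 1/8"
  proof -
    have "2.718 ^ 5 \<le> exp (real 5)" by (rule exp_int_ge)
    moreover have "(128::real) \<le> 2.718 ^ 5" by (simp add: power_divide)
    ultimately have "128 \<le> exp (5::real)" by simp
    then show ?thesis by (simp add: exp_minus field_simps)
  qed
  finally show ?thesis by (simp add: numeral_3_eq_3)
qed


lemma P5: assumes k: "3 \<le> k" and n: "2*k+1 \<le> n"
  shows "bs n (Suc k) ((2*real k+1) / real n) \<le> 1 - (2*real k+1)/(4*real k)"
proof -
  have n': "real n \<ge> 2 * real k + 1" using n by linarith
  have "bs n (Suc k) ((2*real k+1) / real n) \<le> (1/(1/2)) ^ k * exp (- (real n * ((2*real k+1) / real n) * (1 - 1/2)))"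
    using n' by (intro chernoff_exp) auto
  also have "\<dots> = 2 ^ k * exp (- (real k + 1/2))" using n' by (simp add: field_simps)
  also have "\<dots> \<le> 2 ^ k * exp (- real k)" by simp
  also have "\<dots> = (2 / exp 1) ^ k" by (simp add: power_divide exp_of_nat_mult[symmetric] exp_minus field_simps)
  also have "\<dots> \<le> (2 / exp 1) ^ 3"
    using e_ge k by (intro power_decreasing) auto
  also have "\<dots> \<le> (2 / 2.718) ^ 3"
    using e_ge by (intro power_mono divide_left_mono) auto
  also have "\<dots> \<le> 5/12" by (simp add: power_divide)
  also have "5/12 \<le> 1 - (2*real k+1)/(4*real k)" using k by (simp add: field_simps)
  finally show ?thesis .
qed


lemma exp32_ge4: "4 \<le> exp (3/2::real)"
proof -
  have "exp (3/2::real) = exp 1 * exp (1/2)" by (simp flip: exp_add)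
  moreover have "3/2 \<le> exp (1/2::real)" using exp_ge_add_one_self[of "1/2::real"] by simp
  moreover have "2.718 * (3/2) \<le> exp 1 * exp (1/2::real)"
    using e_ge \<open>3/2 \<le> exp (1/2::real)\<close> by (intro mult_mono) auto
  ultimately show ?thesis by simp
qed

lemma P6: assumes k: "3 \<le> k" and n: "2*k+3 \<le> n"
  shows "bs n (Suc k) ((2*real k+3) / real n) \<le> 1 - (2*real k+3)/(4*real k)"
proof -
  have n': "real n \<ge> 2 * real k + 3" using n by linarith
  have "bs n (Suc k) ((2*real k+3) / real n) \<le> (1/(1/2)) ^ k * exp (- (real n * ((2*real k+3) / real n) * (1 - 1/2)))"
    using n' by (intro chernoff_exp) auto
  also have "real n * ((2*real k+3) / real n) * (1 - 1/2) = real k + 3/2" using n' by simp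
  also have "(1/(1/2::real)) ^ k * exp (- (real k + 3/2)) = (2 / exp 1) ^ k * exp (- (3/2))"
  proof -
    have "exp (- (real k + 3/2)) = inverse (exp (real k + 3/2))" by (rule exp_minus)
    also have "exp (real k + 3/2) = exp (real k) * exp (3/2)" by (rule exp_add)
    finally have "exp (- (real k + 3/2)) = inverse (exp (3/2)) / exp (real k)"
      by (simp add: field_simps)
    then show ?thesis by (simp add: power_divide exp_of_nat_mult[symmetric] exp_minus)
  qed
  also have "\<dots> \<le> 1 * exp (- (3/2))"
    using e_ge by (intro mult_right_mono power_le_one) auto
  also have "\<dots> \<le> 1/4"
  proof -
    have "inverse (exp (3/2::real)) \<le> inverse 4"
      using exp32_ge4 by (intro le_imp_inverse_le) auto
    then show ?thesis by (simp add: exp_minus)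
  qed
  also have "1/4 \<le> 1 - (2*real k+3)/(4*real k)" using k by (simp add: field_simps)
  finally show ?thesis .
qed

lemma bs2: "bs N 2 p = (1 - p) ^ N + real N * p * (1 - p) ^ (N - 1)"
  by (simp add: bs_def numeral_2_eq_2)

lemma bs3: "bs N 3 p = (1 - p) ^ N + real N * p * (1 - p) ^ (N - 1) + real (N choose 2) * p^2 * (1 - p) ^ (N - 2)"
  by (simp add: bs_def numeral_3_eq_3 numeral_2_eq_2)

lemma test1: "bs 2 2 (1/2) = 3/4" "bs 3 2 (1/3) = 20/27" "bs 4 2 (1/4) = 189/256"
  "bs 4 3 (3/4) = 67/256" "bs 5 3 (3/5) = 992/3125"
  by (simp_all add: bs_def eval_nat_numeral power_divide)

lemma exp3_ge: "20 \<le> exp (3::real)"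
proof -
  have "(2.718::real) ^ 3 \<le> exp (real 3)" by (rule exp_int_ge)
  moreover have "(20::real) \<le> 2.718 ^ 3" by (simp add: power_divide)
  ultimately show ?thesis by simp
qed

lemma P2: assumes "3 \<le> n" shows "bs n 2 (3 / real n) \<le> 1/4"
proof -
  define p where "p = 3 / real n"
  have n: "real n \<ge> 3" using assms by simp
  have p0: "0 \<le> p" "p \<le> 1" using n by (auto simp: p_def)
  have np: "real n * p = 3" using n by (simp add: p_def)
  have "bs n 2 p = (1 - p) ^ (n - 1) * (1 - p) + 3 * (1 - p) ^ (n - 1)"
  proof -
    have "(1 - p) ^ n = (1 - p) ^ (n - 1) * (1 - p)"
    proof -
      have "n = Suc (n - 1)" using assms by simp
      then have "(1 - p) ^ n = (1 - p) ^ Suc (n - 1)" by simp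
      then show ?thesis by (simp only: power_Suc2)
    qed
    then show ?thesis unfolding bs2 using np by simp
  qed
  also have "\<dots> \<le> 4 * (1 - p) ^ (n - 1)"
  proof -
    have "(1 - p) ^ (n - 1) * (1 - p) \<le> (1 - p) ^ (n - 1) * 1"
      using p0 by (intro mult_left_mono) auto
    then show ?thesis by simp
  qed
  also have "(1 - p) ^ (n - 1) \<le> exp (- (real (n - 1) * (p + p^2/2 + p^3/3)))"
    by (rule pow_le_exp3[OF p0])
  also have "\<dots> \<le> exp (- 3)"
  proof -
    have "real (n - 1) = real n - 1" using assms by simp
    moreover have "(real n - 1) * (p + p^2/2) \<ge> 3"
    proof -
      have "(real n - 1) * (p + p^2/2) = 3 + (3 * real n - 9) / (2 * real n ^ 2)"
        using n unfolding p_def by (simp add: field_simps power2_eq_square)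
      moreover have "0 \<le> (3 * real n - 9) / (2 * real n ^ 2)" using n by simp
      ultimately show ?thesis by linarith
    qed
    moreover have "0 \<le> (real n - 1) * (p^3/3)" using n p0 by simp
    ultimately have "3 \<le> real (n - 1) * (p + p^2/2 + p^3/3)"
      by (simp only: distrib_left)
    then show ?thesis by (simp only: exp_le_cancel_iff neg_le_iff_le)
  qed
  finally have "bs n 2 p \<le> 4 * exp (- 3)" by simp
  also have "\<dots> \<le> 1/4"
  proof -
    have "inverse (exp (3::real)) \<le> inverse 20" using exp3_ge by (intro le_imp_inverse_le) auto
    then show ?thesis by (simp add: exp_minus)
  qed
  finally show ?thesis by (simp add: p_def)
qed

lemma Cond1: assumes "2 \<le> n" shows "1/4 \<le> (1 - 1 / real n) ^ (n - 1)"
proof -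
  define m where "m = n - 1"
  have m: "m \<ge> 1" "n = m + 1" using assms by (auto simp: m_def)
  have "(1 + 1 / real m) ^ m \<le> exp (1 / real m) ^ m"
    by (intro power_mono) (auto simp: exp_ge_add_one_self[of "1 / real m", simplified add.commute])
  also have "\<dots> = exp 1" using m by (simp add: exp_of_nat_mult[symmetric])
  also have "\<dots> \<le> 4" using e_less_272 by simp
  finally have A: "(1 + 1 / real m) ^ m \<le> 4" .
  have B: "(1 - 1 / real n) = inverse (1 + 1 / real m)" using m by (simp add: field_simps)
  have "(1 - 1 / real n) ^ (n - 1) = inverse ((1 + 1 / real m) ^ m)"
    using B by (simp add: m_def power_inverse)
  also have "\<dots> \<ge> inverse 4" using A by (intro le_imp_inverse_le) (auto simp: m add_pos_nonneg)
  finally show ?thesis by simp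
qed

lemma P1_big: assumes "5 \<le> n" shows "bs n 2 (1 / real n) \<le> 3/4"
proof -
  define x where "x = 1 / real n"
  have n: "real n \<ge> 5" using assms by simp
  have x0: "0 \<le> x" "x \<le> 1/5" using n by (auto simp: x_def field_simps)
  have nx: "real n * x = 1" using n by (simp add: x_def)
  have "bs n 2 x = (1 - x) ^ (n - 1) * (2 - x)"
  proof -
    have "(1 - x) ^ n = (1 - x) ^ (n - 1) * (1 - x)"
    proof -
      have "n = Suc (n - 1)" using assms by simp
      then have "(1 - x) ^ n = (1 - x) ^ Suc (n - 1)" by simp
      then show ?thesis by (simp only: power_Suc2)
    qed
    then show ?thesis unfolding bs2 using nx by (simp add: algebra_simps)
  qed
  also have "\<dots> \<le> exp (- (real (n - 1) * (x + x^2/2 + x^3/3))) * (2 - x)"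
    using x0 by (intro mult_right_mono pow_le_exp3) auto
  also have "real (n - 1) * (x + x^2/2 + x^3/3) = 1 - (x/2 + x^2/6 + x^3/3)"
  proof -
    have "real (n - 1) = real n - 1" using assms by simp
    then have "real (n - 1) * x = 1 - x" using nx by (simp add: algebra_simps)
    moreover have "real (n - 1) * (x + x^2/2 + x^3/3) = (real (n - 1) * x) * (1 + x/2 + x^2/3)"
      by (simp add: algebra_simps power2_eq_square power3_eq_cube)
    ultimately have "real (n - 1) * (x + x^2/2 + x^3/3) = (1 - x) * (1 + x/2 + x^2/3)"
      by simp
    also have "(1 - x) * (1 + x/2 + x^2/3) = 1 - (x/2 + x^2/6 + x^3/3)"
      by (simp add: field_simps power2_eq_square power3_eq_cube)
    finally show ?thesis .
  qed
  finally have A: "bs n 2 x \<le> exp (-1) * exp (x/2 + x^2/6 + x^3/3) * (2 - x)"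
    by (simp add: exp_add[symmetric])
  define y where "y = x/2 + x^2/6 + x^3/3"
  have y0: "0 \<le> y" using x0 by (simp add: y_def)
  have y1: "y \<le> x/2 + x^2/4"
  proof -
    have "x^3/3 \<le> x^2/12"
    proof -
      have "x^3 = x^2 * x" by (simp add: power2_eq_square power3_eq_cube)
      also have "\<dots> \<le> x^2 * (1/4)" using x0 by (intro mult_left_mono) auto
      finally show ?thesis by simp
    qed
    then show ?thesis by (simp add: y_def)
  qed
  have y2: "y \<le> 11/100"
  proof -
    have "x^2 \<le> (1/5)^2" using x0 by (intro power_mono) auto
    then have "x^2 \<le> 1/25" by (simp add: power_divide)
    then show ?thesis using y1 x0 by linarith
  qed
  have "exp y \<le> 1 + y + y^2" using y0 y2 by (intro exp_bound) auto
  also have "\<dots> \<le> 1 + y + y * (11/100)"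
    using mult_left_mono[OF y2 y0] by (simp add: power2_eq_square)
  also have "\<dots> \<le> 1 + (111/100) * (x/2 + x^2/4)" using y1 by simp
  finally have B: "exp y \<le> 1 + (111/100) * (x/2 + x^2/4)" .
  have C: "(1 + (111/100) * (x/2 + x^2/4)) * (2 - x) \<le> 2.0385"
  proof -
    have "(1 + (111/100) * (x/2 + x^2/4)) * (2 - x) = 2 + (11/100) * x - (111/400) * x^3"
      by (simp add: field_simps power2_eq_square power3_eq_cube)
    also have "\<dots> \<le> 2 + (11/100) * (1/5)"
    proof -
      have "0 \<le> x^3" using x0 by simp
      then show ?thesis using x0 by linarith
    qed
    also have "\<dots> \<le> 2.0385" by simp
    finally show ?thesis .
  qed
  have "exp y * (2 - x) \<le> (1 + (111/100) * (x/2 + x^2/4)) * (2 - x)"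
  proof (rule mult_right_mono[OF B])
    show "0 \<le> 2 - x" using x0 by linarith
  qed
  then have E1: "exp y * (2 - x) \<le> 2.0385" using C by linarith
  have E2: "exp (-1) \<le> inverse (2.718::real)"
  proof -
    have "inverse (exp (1::real)) \<le> inverse 2.718" using e_ge by (intro le_imp_inverse_le) auto
    moreover have "exp (- 1::real) = inverse (exp 1)" by (rule exp_minus)
    ultimately show ?thesis by simp
  qed
  have E3: "0 \<le> exp y * (2 - x)" using x0 by simp
  have E4: "(0::real) \<le> inverse 2.718" by simp
  have "exp (-1) * (exp y * (2 - x)) \<le> inverse 2.718 * 2.0385"
    by (rule mult_mono[OF E2 E1 E4 E3])
  moreover have "bs n 2 x \<le> exp (-1) * (exp y * (2 - x))" using A unfolding y_def by (simp only: mult.assoc)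
  moreover have "inverse 2.718 * 2.0385 \<le> (3/4::real)" by simp
  ultimately have "bs n 2 x \<le> 3/4" by linarith
  then show ?thesis by (simp add: x_def)
qed


lemma P1: assumes "2 \<le> n" shows "bs n 2 (1 / real n) \<le> 3/4"
proof -
  consider "n = 2" | "n = 3" | "n = 4" | "5 \<le> n" using assms by linarith
  then show ?thesis
  proof cases
    case 1 then show ?thesis using test1 by simp
  next
    case 2 then show ?thesis using test1 by simp
  next
    case 3 then show ?thesis using test1 by simp
  next
    case 4 then show ?thesis by (rule P1_big)
  qed
qed


lemma choose2_real: "2 * real (n choose 2) = real n * (real n - 1)"
proof (induction n)
  case 0 then show ?case by simp
next
  case (Suc n)
  have "Suc n choose 2 = n + (n choose 2)"
    by (simp add: numeral_2_eq_2)
  then show ?case using Suc by (simp add: algebra_simps)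
qed

lemma P3_big: assumes "6 \<le> n" shows "bs n 3 (3 / real n) \<le> 5/8"
proof -
  define p where "p = 3 / real n"
  have n: "real n \<ge> 6" using assms by simp
  have p0: "0 \<le> p" "p \<le> 1/2" using n by (auto simp: p_def field_simps)
  have np: "real n * p = 3" using n by (simp add: p_def)
  have c2: "real (n choose 2) * p^2 = 9/2 - 3/2 * p"
  proof -
    have "real (n choose 2) = real n * (real n - 1) / 2"
      using choose2_real[of n] by simp
    then have "real (n choose 2) * p^2 = real n * (real n - 1) / 2 * p^2" by simp
    also have "\<dots> = ((real n * p) * (real n * p) - (real n * p) * p) / 2"
      by (simp add: power2_eq_square algebra_simps)
    also have "\<dots> = 9/2 - 3/2 * p" unfolding np by simp
    finally show ?thesis .
  qed
  have "bs n 3 p = (1 - p) ^ (n - 2) * (17/2 - 13/2 * p + p^2)"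
  proof -
    have e0: "n = Suc (Suc (n - 2))" using assms by simp
    have a: "(1 - p) ^ n = (1 - p) ^ (n - 2) * (1 - p)^2"
      by (subst e0) (simp add: power2_eq_square)
    have b: "(1 - p) ^ (n - 1) = (1 - p) ^ (n - 2) * (1 - p)"
    proof -
      have "n - 1 = Suc (n - 2)" using assms by simp
      then show ?thesis by simp
    qed
    have "bs n 3 p = (1 - p) ^ (n - 2) * ((1 - p)^2 + 3 * (1 - p) + (9/2 - 3/2 * p))"
    proof -
      have "bs n 3 p = (1 - p) ^ (n - 2) * (1 - p)^2 + (real n * p) * ((1 - p) ^ (n - 2) * (1 - p))
          + (real (n choose 2) * p^2) * (1 - p) ^ (n - 2)"
        unfolding bs3 a b by (simp only: mult_ac)
      also have "\<dots> = (1 - p) ^ (n - 2) * (1 - p)^2 + 3 * ((1 - p) ^ (n - 2) * (1 - p))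
          + (9/2 - 3/2 * p) * (1 - p) ^ (n - 2)"
        unfolding np c2 ..
      finally show ?thesis by (simp add: algebra_simps)
    qed
    then show ?thesis by (simp add: algebra_simps power2_eq_square)
  qed
  also have "(1 - p) ^ (n - 2) \<le> exp (- (real (n - 2) * (p + p^2/2 + p^3/3)))"
    using p0 by (intro pow_le_exp3) auto
  also have "\<dots> \<le> exp (- (real (n - 2) * (p + p^2/2)))"
  proof -
    have "0 \<le> real (n - 2) * (p^3/3)" using p0 by simp
    then show ?thesis by (simp add: algebra_simps)
  qed
  also have "real (n - 2) * (p + p^2/2) = 3 - (p/2 + p^2)"
  proof -
    have "real (n - 2) = real n - 2" using assms by (simp add: of_nat_diff)
    then have "real (n - 2) * (p + p^2/2) = (real n * p) * (1 + p/2) - 2 * p - p^2"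
      by (simp add: field_simps power2_eq_square)
    then show ?thesis using np by (simp add: algebra_simps)
  qed
  finally have A: "bs n 3 p \<le> exp (- (3 - (p/2 + p^2))) * (17/2 - 13/2 * p + p^2)"
    using p0 by (simp add: mult_right_mono power2_eq_square)
  define z where "z = p/2 + p^2"
  have pp: "p^2 \<le> p/2"
  proof -
    have "p * p \<le> p * (1/2)" using p0 by (intro mult_left_mono) auto
    then show ?thesis by (simp add: power2_eq_square)
  qed
  have z0: "0 \<le> z" "z \<le> p" using p0 pp by (auto simp: z_def)
  have ez: "exp z \<le> 1 + 3/2 * p"
  proof -
    have "exp z \<le> 1 + z + z^2" using z0 p0 by (intro exp_bound) auto
    moreover have "z^2 \<le> p/2"
    proof -
      have "z^2 \<le> p^2" using z0 by (intro power_mono) auto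
      also have "p^2 \<le> p/2" by (rule pp)
      finally show ?thesis .
    qed
    ultimately show ?thesis using z0 by linarith
  qed
  have poly: "(1 + 3/2 * p) * (17/2 - 13/2 * p + p^2) \<le> 12"
  proof -
    have "p^2 \<le> p/2" by (rule pp)
    then have "17/2 - 13/2 * p + p^2 \<le> 17/2 - 6 * p" by simp
    then have "(1 + 3/2 * p) * (17/2 - 13/2 * p + p^2) \<le> (1 + 3/2 * p) * (17/2 - 6 * p)"
      using p0 by (intro mult_left_mono) auto
    also have "\<dots> = 17/2 + 27/4 * p - 9 * p^2" by (simp add: algebra_simps power2_eq_square)
    also have "\<dots> \<le> 12"
    proof -
      have "0 \<le> p^2" by simp
      then show ?thesis using p0 by linarith
    qed
    finally show ?thesis .
  qed
  have B: "exp (- (3 - (p/2 + p^2))) = inverse (exp 3) * exp z"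
  proof -
    have "- (3 - (p/2 + p^2)) = z + (- 3)" by (simp add: z_def)
    then have "exp (- (3 - (p/2 + p^2))) = exp (z + (- 3))" by (rule arg_cong)
    also have "\<dots> = exp z * exp (- 3)" by (rule exp_add)
    finally have "exp (- (3 - (p/2 + p^2))) = exp z * exp (- 3)" .
    then show ?thesis by (simp add: exp_minus)
  qed
  have Q: "0 \<le> 17/2 - 13/2 * p + p^2" using p0 by (simp add: power2_eq_square)
  have "bs n 3 p \<le> inverse (exp 3) * (exp z * (17/2 - 13/2 * p + p^2))"
    using A B by (simp add: mult_ac)
  also have "\<dots> \<le> inverse 20 * 12"
  proof (rule mult_mono)
    show "inverse (exp 3) \<le> inverse (20::real)" using exp3_ge by (intro le_imp_inverse_le) auto
    have "exp z * (17/2 - 13/2 * p + p^2) \<le> (1 + 3/2 * p) * (17/2 - 13/2 * p + p^2)"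
      by (rule mult_right_mono[OF ez Q])
    then show "exp z * (17/2 - 13/2 * p + p^2) \<le> 12" using poly by linarith
    show "(0::real) \<le> inverse 20" by simp
    show "0 \<le> exp z * (17/2 - 13/2 * p + p^2)" using Q by simp
  qed
  also have "\<dots> \<le> 5/8" by simp
  finally show ?thesis by (simp add: p_def)
qed

lemma P3: assumes "3 \<le> n" shows "bs n 3 (3 / real n) \<le> 5/8"
proof -
  consider "n = 3" | "n = 4" | "n = 5" | "6 \<le> n" using assms by linarith
  then show ?thesis
  proof cases
    case 1
    have "bs 3 (Suc 2) 1 = 0" by (rule Pone) simp
    then show ?thesis using 1 by (simp add: numeral_3_eq_3)
  next
    case 2 then show ?thesis using test1 by simp
  next
    case 3 then show ?thesis using test1 by simp
  next
    case 4 then show ?thesis by (rule P3_big)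
  qed
qed

definition phi :: "nat \<Rightarrow> nat \<Rightarrow> real \<Rightarrow> real" where
  "phi N k y = real (N choose k) * y ^ k * (1 - y) ^ (N - k)"

lemma phi_deriv:
  "(phi N k has_real_derivative real (N choose k) * (real k * y ^ (k - 1) * (1 - y) ^ (N - k)
       - real (N - k) * y ^ k * (1 - y) ^ (N - k - 1))) (at y)"
proof -
  have d1: "((\<lambda>y. y ^ k) has_real_derivative real k * y ^ (k - 1)) (at y)"
    using DERIV_pow[of k y] by simp
  have d2: "((\<lambda>y. (1 - y) ^ (N - k)) has_real_derivative
               real (N - k) * (1 - y) ^ (N - k - 1) * (-1)) (at y)"
  proof -
    have "((\<lambda>p. 1 - p) has_real_derivative -1) (at y)"
      by (auto intro!: derivative_eq_intros)
    from DERIV_power[OF this, of "N - k"] show ?thesis by (simp add: mult_ac)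
  qed
  have "((\<lambda>y. y ^ k * (1 - y) ^ (N - k)) has_real_derivative
        real k * y ^ (k - 1) * (1 - y) ^ (N - k) + real (N - k) * (1 - y) ^ (N - k - 1) * (-1) * y ^ k) (at y)"
    using DERIV_mult[OF d1 d2] by (simp add: mult_ac)
  from DERIV_cmult[OF this, of "real (N choose k)"] show ?thesis
    unfolding phi_def by (simp add: algebra_simps)
qed

lemma phi_deriv_sign:
  assumes k: "1 \<le> k" "k \<le> N" and y: "0 < y" "y < 1"
  shows "real k * y ^ (k - 1) * (1 - y) ^ (N - k) - real (N - k) * y ^ k * (1 - y) ^ (N - k - 1)
         = y ^ (k - 1) * (1 - y) ^ (N - k - 1) * (real k - real N * y)
         \<or> (N = k \<and> real k * y ^ (k - 1) * (1 - y) ^ (N - k) - real (N - k) * y ^ k * (1 - y) ^ (N - k - 1)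
              = real k * y ^ (k - 1))"
proof (cases "N = k")
  case True then show ?thesis by simp
next
  case False
  then have Nk: "N - k = Suc (N - k - 1)" using k by simp
  have kk: "k = Suc (k - 1)" using k by simp
  have e1: "y ^ k = y ^ (k - 1) * y" by (subst kk) (simp only: power_Suc2 diff_Suc_1)
  have e2: "(1 - y) ^ (N - k) = (1 - y) ^ (N - k - 1) * (1 - y)" by (subst Nk) (simp only: power_Suc2 diff_Suc_1)
  have e3: "real (N - k) = real N - real k" using k by (simp add: of_nat_diff)
  define A where "A = y ^ (k - 1)"
  define B where "B = (1 - y) ^ (N - k - 1)"
  have "real k * y ^ (k - 1) * (1 - y) ^ (N - k) - real (N - k) * y ^ k * (1 - y) ^ (N - k - 1)
        = real k * A * (B * (1 - y)) - (real N - real k) * (A * y) * B"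
    unfolding e1 e2 e3 A_def B_def ..
  also have "\<dots> = A * B * (real k - real N * y)" by (simp add: algebra_simps)
  finally have "real k * y ^ (k - 1) * (1 - y) ^ (N - k) - real (N - k) * y ^ k * (1 - y) ^ (N - k - 1)
         = y ^ (k - 1) * (1 - y) ^ (N - k - 1) * (real k - real N * y)"
    unfolding A_def B_def .
  then show ?thesis by simp
qed

lemma phi_up:
  assumes k: "1 \<le> k" "k \<le> N" and st: "0 \<le> s" "s \<le> t" "t \<le> real k / real N"
  shows "phi N k s \<le> phi N k t"
proof (rule DERIV_nonneg_imp_increasing_open[OF st(2)])
  have N: "real N > 0" using k by simp
  have "real k / real N \<le> 1" using k by simp
  then have t1: "t \<le> 1" using st by linarith
  fix y assume y: "s < y" "y < t"
  then have y01: "0 < y" "y < 1" using st t1 by auto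
  have yk: "real N * y \<le> real k"
  proof -
    have "real N * y \<le> real N * t" using y N by (intro mult_left_mono) auto
    also have "\<dots> \<le> real k" using st N by (simp add: field_simps)
    finally show ?thesis .
  qed
  show "\<exists>d. (phi N k has_real_derivative d) (at y) \<and> 0 \<le> d"
  proof -
    have "0 \<le> real (N choose k) * (real k * y ^ (k - 1) * (1 - y) ^ (N - k)
       - real (N - k) * y ^ k * (1 - y) ^ (N - k - 1))"
      using phi_deriv_sign[OF k y01] y01 yk by (auto intro!: mult_nonneg_nonneg)
    then show ?thesis using phi_deriv by blast
  qed
next
  show "continuous_on {s..t} (phi N k)"
    using phi_deriv by (meson DERIV_continuous continuous_at_imp_continuous_on)
qed

lemma phi_down:
  assumes k: "1 \<le> k" "k \<le> N" and st: "real k / real N \<le> s" "s \<le> t" "t \<le> 1"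
  shows "phi N k t \<le> phi N k s"
proof -
  have "(\<lambda>y. - phi N k y) s \<le> (\<lambda>y. - phi N k y) t"
  proof (rule DERIV_nonneg_imp_increasing_open[OF st(2)])
    have N: "real N > 0" using k by simp
    fix y assume y: "s < y" "y < t"
    have "0 \<le> real k / real N" by simp
    then have s0: "0 \<le> s" using st(1) by linarith
    then have y01: "0 < y" "y < 1" using y st by auto
    have yk: "real k \<le> real N * y"
    proof -
      have "real k \<le> real N * s" using st N by (simp add: field_simps)
      also have "\<dots> \<le> real N * y" using y N by (intro mult_left_mono) auto
      finally show ?thesis .
    qed
    have Nk: "N \<noteq> k"
    proof
      assume "N = k"
      then have "1 \<le> y" using yk N by simp
      then show False using y01 by simp
    qed
    show "\<exists>d. ((\<lambda>y. - phi N k y) has_real_derivative d) (at y) \<and> 0 \<le> d"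
    proof -
      have "0 \<le> - (real (N choose k) * (real k * y ^ (k - 1) * (1 - y) ^ (N - k)
         - real (N - k) * y ^ k * (1 - y) ^ (N - k - 1)))"
        using phi_deriv_sign[OF k y01] y01 yk Nk
        by (auto simp: mult_nonneg_nonpos)
      then show ?thesis using DERIV_minus[OF phi_deriv] by blast
    qed
  next
    show "continuous_on {s..t} (\<lambda>y. - phi N k y)"
    proof -
      have "continuous_on {s..t} (phi N k)"
        using phi_deriv by (meson DERIV_continuous continuous_at_imp_continuous_on)
      then show ?thesis by (rule continuous_on_minus)
    qed
  qed
  then show ?thesis by simp
qed

definition Fk :: "nat \<Rightarrow> nat \<Rightarrow> real \<Rightarrow> real" where
  "Fk n k y = bs n (Suc k) y + real n * y / (4 * real k)"

lemma Fk_deriv: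
  assumes "k < n" "1 \<le> k"
  shows "(Fk n k has_real_derivative real n * (1 / (4 * real k) - phi (n - 1) k y)) (at y)"
proof -
  have "((\<lambda>y. bs n (Suc k) y + real n * y / (4 * real k)) has_real_derivative
      - (real n * real ((n - 1) choose k) * y ^ k * (1 - y) ^ (n - 1 - k)) + real n / (4 * real k)) (at y)"
    using assms by (intro DERIV_add bs_deriv assms(1)) (auto intro!: derivative_eq_intros)
  moreover have "- (real n * real ((n - 1) choose k) * y ^ k * (1 - y) ^ (n - 1 - k)) + real n / (4 * real k)
     = real n * (1 / (4 * real k) - phi (n - 1) k y)"
    unfolding phi_def using assms by (simp add: algebra_simps)
  ultimately show ?thesis unfolding Fk_def[abs_def] by simp
qed

lemma endpoint:
  assumes k: "1 \<le> k" "k < n" and ab: "0 \<le> a" "a \<le> x" "x \<le> b" "b \<le> 1"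
    and cond: "real k / real (n - 1) \<le> a \<or> 1/4 \<le> real k * phi (n - 1) k a"
    and Pa: "Fk n k a \<le> 1" and Pb: "Fk n k b \<le> 1"
  shows "Fk n k x \<le> 1"
proof (rule ccontr)
  assume "\<not> Fk n k x \<le> 1"
  then have Fx: "Fk n k x > 1" by simp
  have ax: "a < x" using Fx Pa ab by (cases "a = x") auto
  have xb: "x < b" using Fx Pb ab by (cases "x = b") auto
  have nk: "real n > 0" using k by simp
  have kk: "real k > 0" using k by simp
  obtain xi where xi: "a < xi" "xi < x"
    "Fk n k x - Fk n k a = (x - a) * (real n * (1 / (4 * real k) - phi (n - 1) k xi))"
    using MVT2[OF ax, of "Fk n k" "\<lambda>y. real n * (1 / (4 * real k) - phi (n - 1) k y)"] Fk_deriv[OF k(2) k(1)]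
    by blast
  obtain eta where eta: "x < eta" "eta < b"
    "Fk n k b - Fk n k x = (b - x) * (real n * (1 / (4 * real k) - phi (n - 1) k eta))"
    using MVT2[OF xb, of "Fk n k" "\<lambda>y. real n * (1 / (4 * real k) - phi (n - 1) k y)"] Fk_deriv[OF k(2) k(1)]
    by blast
  have "0 < (x - a) * (real n * (1 / (4 * real k) - phi (n - 1) k xi))" using xi Fx Pa by linarith
  then have "0 < real n * (1 / (4 * real k) - phi (n - 1) k xi)" using ax
    by (simp add: zero_less_mult_iff)
  then have p1: "phi (n - 1) k xi < 1 / (4 * real k)" using nk by (simp add: zero_less_mult_iff)
  have "(b - x) * (real n * (1 / (4 * real k) - phi (n - 1) k eta)) < 0" using eta Fx Pb by linarith
  then have "real n * (1 / (4 * real k) - phi (n - 1) k eta) < 0" using xb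
    by (simp add: mult_less_0_iff)
  then have p2: "1 / (4 * real k) < phi (n - 1) k eta" using nk by (simp add: mult_less_0_iff)
  have k1: "1 \<le> k" "k \<le> n - 1" using k by auto
  show False
  proof (cases "xi \<le> real k / real (n - 1)")
    case True
    then have c: "1/4 \<le> real k * phi (n - 1) k a" using cond xi by auto
    have "phi (n - 1) k a \<le> phi (n - 1) k xi"
      using phi_up[OF k1 ab(1) _ True] xi by simp
    then have "real k * phi (n - 1) k a \<le> real k * phi (n - 1) k xi" using kk by simp
    moreover have "real k * phi (n - 1) k xi < 1/4" using p1 kk by (simp add: field_simps)
    ultimately show False using c by linarith
  next
    case False
    have "phi (n - 1) k eta \<le> phi (n - 1) k xi"
      using phi_down[OF k1, of xi eta] False xi eta ab by simp
    then show False using p1 p2 by linarith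
  qed
qed

lemma Fk_one: assumes "k < n" shows "Fk n k 1 = real n / (4 * real k)"
  unfolding Fk_def using Pone[OF assms] by simp

lemma exists_k:
  assumes n: "2 \<le> n" and p: "1 / real n \<le> p" "p \<le> 1"
  shows "\<exists>k. 1 \<le> k \<and> real k \<le> real n * p \<and> k < n \<and> Fk n k p \<le> 1"
proof -
  have nr: "real n \<ge> 2" using n by simp
  have mu1: "1 \<le> real n * p" using p nr by (simp add: field_simps)
  have mun: "real n * p \<le> real n" using p nr by simp
  consider "real n * p \<le> 3" | "3 < real n * p" "real n * p \<le> 7" | "7 < real n * p" by linarith
  then show ?thesis
  proof cases
    case 1
    have k1: "1 \<le> (1::nat)" "1 < n" using n by auto
    define b where "b = (if 3 \<le> n then 3 / real n else 1)"
    have "Fk n 1 p \<le> 1"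
    proof (rule endpoint[OF k1, of "1 / real n" p b])
      show "0 \<le> 1 / real n" by simp
      show "1 / real n \<le> p" by fact
      show "p \<le> b" using 1 nr p unfolding b_def by (auto simp: field_simps)
      show "b \<le> 1" unfolding b_def by auto
      have "real 1 * phi (n - 1) 1 (1 / real n) = (1 - 1 / real n) ^ (n - 1)"
      proof -
        have e: "n - 1 - 1 = n - 2" "n - 1 = Suc (n - 2)" using n by auto
        have "real (n - 1) * (1 / real n) = 1 - 1 / real n" using nr by (simp add: of_nat_diff field_simps)
        then show ?thesis unfolding phi_def e by simp
      qed
      then show "real 1 / real (n - 1) \<le> 1 / real n \<or> 1/4 \<le> real 1 * phi (n - 1) 1 (1 / real n)"
        using Cond1[OF n] by simp
      show "Fk n 1 (1 / real n) \<le> 1" using P1[OF n] nr unfolding Fk_def by (simp add: numeral_2_eq_2)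
      show "Fk n 1 b \<le> 1"
      proof (cases "3 \<le> n")
        case True
        then show ?thesis using P2[OF True] nr unfolding Fk_def b_def by (simp add: numeral_2_eq_2)
      next
        case False
        then have "n = 2" using n by simp
        then show ?thesis using Fk_one[of 1 n] unfolding b_def by simp
      qed
    qed
    then show ?thesis using mu1 n by (intro exI[of _ 1]) auto
  next
    case 2
    have n3: "3 \<le> n" using 2 mun by linarith
    have k1: "1 \<le> (2::nat)" "2 < n" using n3 by auto
    define b where "b = (if 7 \<le> n then 7 / real n else 1)"
    have "Fk n 2 p \<le> 1"
    proof (rule endpoint[OF k1, of "3 / real n" p b])
      show "0 \<le> 3 / real n" by simp
      show "3 / real n \<le> p" using 2 nr by (simp add: field_simps)
      show "p \<le> b" using 2 nr p unfolding b_def by (auto simp: field_simps)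
      show "b \<le> 1" unfolding b_def by auto
      have "real 2 / real (n - 1) \<le> 3 / real n" using n3 by (simp add: of_nat_diff field_simps)
      then show "real 2 / real (n - 1) \<le> 3 / real n \<or> 1/4 \<le> real 2 * phi (n - 1) 2 (3 / real n)" by simp
      show "Fk n 2 (3 / real n) \<le> 1" using P3[OF n3] nr unfolding Fk_def by (simp add: numeral_3_eq_3)
      show "Fk n 2 b \<le> 1"
      proof (cases "7 \<le> n")
        case True
        then show ?thesis using P4[OF True] nr unfolding Fk_def b_def by (simp add: numeral_3_eq_3)
      next
        case False
        then have "real n \<le> 6" by simp
        then show ?thesis using Fk_one[of 2 n] k1 False unfolding b_def by simp
      qed
    qed
    then show ?thesis using 2 n3 by (intro exI[of _ 2]) auto
  next
    case 3
    define k where "k = nat \<lfloor>(real n * p - 1) / 2\<rfloor>"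
    have fl: "real_of_int \<lfloor>(real n * p - 1) / 2\<rfloor> \<le> (real n * p - 1) / 2"
             "(real n * p - 1) / 2 < real_of_int \<lfloor>(real n * p - 1) / 2\<rfloor> + 1"
      by linarith+
    have fl0: "0 \<le> \<lfloor>(real n * p - 1) / 2\<rfloor>" using 3 by simp
    have kr: "real k = real_of_int \<lfloor>(real n * p - 1) / 2\<rfloor>" unfolding k_def using fl0 by simp
    have k_lo: "2 * real k + 1 \<le> real n * p"
    proof -
      have "real k \<le> (real n * p - 1) / 2" using fl kr by linarith
      then show ?thesis by (simp add: field_simps)
    qed
    have k_hi: "real n * p < 2 * real k + 3"
    proof -
      have "(real n * p - 1) / 2 < real k + 1" using fl kr by linarith
      then show ?thesis by (simp add: field_simps)
    qed
    have k3: "3 \<le> k" using k_hi 3 by linarith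
    have kn: "2 * k + 1 \<le> n" using k_lo mun by linarith
    have k1: "1 \<le> k" "k < n" using k3 kn by auto
    define b where "b = (if 2 * k + 3 \<le> n then (2 * real k + 3) / real n else 1)"
    have "Fk n k p \<le> 1"
    proof (rule endpoint[OF k1, of "(2 * real k + 1) / real n" p b])
      show "0 \<le> (2 * real k + 1) / real n" by simp
      show "(2 * real k + 1) / real n \<le> p" using k_lo nr by (simp add: field_simps)
      show "p \<le> b" using k_hi nr p unfolding b_def by (auto simp: field_simps)
      show "b \<le> 1" unfolding b_def using nr by (auto simp: field_simps)
      have "real k / real (n - 1) \<le> (2 * real k + 1) / real n"
      proof -
        have n1: "real (n - 1) = real n - 1" "real n - 1 > 0" using n by (auto simp: of_nat_diff)
        have "real k * real n \<le> (2 * real k + 1) * (real n - 1)"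
        proof -
          have "2 * real k \<le> real k * real n" using nr by (simp add: mult_left_mono mult.commute)
          then show ?thesis using nr by (simp add: algebra_simps)
        qed
        then show ?thesis using n1 nr by (simp add: field_simps)
      qed
      then show "real k / real (n - 1) \<le> (2 * real k + 1) / real n \<or>
          1/4 \<le> real k * phi (n - 1) k ((2 * real k + 1) / real n)" by simp
      show "Fk n k ((2 * real k + 1) / real n) \<le> 1"
      proof -
        have "real n * ((2 * real k + 1) / real n) = 2 * real k + 1" using nr by simp
        then show ?thesis using P5[OF k3 kn] unfolding Fk_def by simp
      qed
      show "Fk n k b \<le> 1"
      proof (cases "2 * k + 3 \<le> n")
        case True
        have "real n * ((2 * real k + 3) / real n) = 2 * real k + 3" using nr by simp
        then show ?thesis using P6[OF k3 True] True unfolding Fk_def b_def by simp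
      next
        case False
        then have "real n \<le> 4 * real k" using k3 by linarith
        moreover have "real k > 0" using k1 by simp
        ultimately have "real n / (4 * real k) \<le> 1" by (simp add: field_simps)
        then show ?thesis using Fk_one[OF k1(2)] False unfolding b_def by simp
      qed
    qed
    then show ?thesis using k_lo k1 by (intro exI[of _ k]) auto
  qed
qed

lemma v_bounds:
  assumes F: "cont_dist_01 F" and t: "0 \<le> t"
  shows "0 \<le> value_of_quantile F t" "value_of_quantile F t \<le> 1"
proof -
  have F0: "F 0 = 0" using F unfolding cont_dist_01_def by auto
  have mem: "0 \<in> {x \<in> {0..1}. F x \<le> t}" using F0 t by simp
  have bdd: "bdd_above {x \<in> {0..1::real}. F x \<le> t}" by (rule bdd_aboveI[of _ 1]) auto
  show "0 \<le> value_of_quantile F t" unfolding value_of_quantile_def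
    using cSup_upper[OF mem bdd] .
  have ne: "{x \<in> {0..1::real}. F x \<le> t} \<noteq> {}" using mem by blast
  show "value_of_quantile F t \<le> 1" unfolding value_of_quantile_def
    by (rule cSup_least[OF ne]) auto
qed

lemma v_mono:
  assumes F: "cont_dist_01 F" and st: "0 \<le> s" "s \<le> t"
  shows "value_of_quantile F s \<le> value_of_quantile F t"
proof -
  have F0: "F 0 = 0" using F unfolding cont_dist_01_def by auto
  have mem: "0 \<in> {x \<in> {0..1}. F x \<le> s}" using F0 st by simp
  have bdd: "bdd_above {x \<in> {0..1::real}. F x \<le> t}" by (rule bdd_aboveI[of _ 1]) auto
  have ne: "{x \<in> {0..1::real}. F x \<le> s} \<noteq> {}" using mem by blast
  show ?thesis unfolding value_of_quantile_def
    using st by (intro cSup_subset_mono[OF ne bdd]) auto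
qed

definition dA :: "nat \<Rightarrow> nat \<Rightarrow> real \<Rightarrow> real" where
  "dA n k t = real (n - 1) * real ((n - 2) choose (k - 1)) * (1 - t) ^ (k - 1) * t ^ (n - 1 - k)"

lemma alloc_eq: "alloc_topk n k = (\<lambda>t. bs (n - 1) k (1 - t))"
  unfolding alloc_topk_def bs_def by (rule ext) simp

lemma alloc_deriv:
  assumes k: "1 \<le> k" "k < n"
  shows "(alloc_topk n k has_real_derivative dA n k t) (at t)"
proof -
  obtain j where j: "k = Suc j" using k by (cases k) auto
  have jn: "j < n - 1" using k j by simp
  have d: "(bs (n - 1) (Suc j) has_real_derivative
      - (real (n - 1) * real ((n - 1 - 1) choose j) * (1 - t) ^ j * (1 - (1 - t)) ^ (n - 1 - 1 - j))) (at (1 - t))"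
    by (rule bs_deriv[OF jn])
  have "((\<lambda>t. bs (n - 1) (Suc j) (1 - t)) has_real_derivative
      - (real (n - 1) * real ((n - 1 - 1) choose j) * (1 - t) ^ j * (1 - (1 - t)) ^ (n - 1 - 1 - j)) * (-1)) (at t)"
    by (rule DERIV_chain2[where g="\<lambda>t. 1 - t", OF d]) (auto intro!: derivative_eq_intros)
  moreover have "n - 1 - 1 - j = n - 1 - k" "n - 1 - 1 = n - 2" "j = k - 1" using j by auto
  ultimately show ?thesis unfolding alloc_eq dA_def j by simp
qed

lemma bs_zero: "bs N (Suc k) 0 = 1"
proof -
  have "bs N (Suc k) 0 = (\<Sum>j<Suc k. if j = 0 then 1 else 0)"
    unfolding bs_def by (intro sum.cong) auto
  also have "\<dots> = 1" by (simp add: sum.delta)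
  finally show ?thesis .
qed

lemma integral_g:
  assumes k: "1 \<le> k" "k < n" and q: "0 \<le> q" "q \<le> 1"
  shows "((\<lambda>t. (1 - t) * dA n k t) has_integral
            real k / real n * (1 - bs n (Suc k) (1 - q))) {q..1}"
proof -
  define Psi where "Psi t = real k / real n * bs n (Suc k) (1 - t)" for t
  have kn: "k < n" using k by simp
  have eqc: "real k * real ((n - 1) choose k) = real (n - 1) * real ((n - 2) choose (k - 1))"
  proof -
    obtain j where j: "k = Suc j" using k by (cases k) auto
    have "Suc j * ((n - 1) choose Suc j) = (n - 1) * ((n - 1 - 1) choose j)"
      by (rule binomial_absorption)
    then show ?thesis using j by (metis diff_Suc_1 diff_diff_left of_nat_mult one_add_one)
  qed
  have der: "(Psi has_real_derivative (1 - t) * dA n k t) (at t)" for t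
  proof -
    have d: "(bs n (Suc k) has_real_derivative
      - (real n * real ((n - 1) choose k) * (1 - t) ^ k * (1 - (1 - t)) ^ (n - 1 - k))) (at (1 - t))"
      by (rule bs_deriv[OF kn])
    have "((\<lambda>t. bs n (Suc k) (1 - t)) has_real_derivative
      - (real n * real ((n - 1) choose k) * (1 - t) ^ k * (1 - (1 - t)) ^ (n - 1 - k)) * (-1)) (at t)"
      by (rule DERIV_chain2[where g="\<lambda>t. 1 - t", OF d]) (auto intro!: derivative_eq_intros)
    from DERIV_cmult[OF this, of "real k / real n"]
    have "(Psi has_real_derivative real k / real n *
       (- (real n * real ((n - 1) choose k) * (1 - t) ^ k * (1 - (1 - t)) ^ (n - 1 - k)) * (-1))) (at t)"
      unfolding Psi_def[abs_def] by simp
    moreover have "real k / real n *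
       (- (real n * real ((n - 1) choose k) * (1 - t) ^ k * (1 - (1 - t)) ^ (n - 1 - k)) * (-1))
       = (1 - t) * dA n k t"
    proof -
      have kk: "(1 - t) ^ k = (1 - t) * (1 - t) ^ (k - 1)" using k by (cases k) auto
      have "real k / real n *
       (- (real n * real ((n - 1) choose k) * (1 - t) ^ k * (1 - (1 - t)) ^ (n - 1 - k)) * (-1))
         = (real k * real ((n - 1) choose k)) * (1 - t) ^ k * t ^ (n - 1 - k)"
        using k by simp
      also have "\<dots> = (1 - t) * dA n k t" unfolding eqc dA_def kk by (simp add: mult_ac)
      finally show ?thesis .
    qed
    ultimately show ?thesis by simp
  qed
  have "((\<lambda>t. (1 - t) * dA n k t) has_integral (Psi 1 - Psi q)) {q..1}"
    using q der by (intro fundamental_theorem_of_calculus)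
      (auto simp: has_real_derivative_iff_has_vector_derivative[symmetric] intro: DERIV_subset)
  moreover have "Psi 1 - Psi q = real k / real n * (1 - bs n (Suc k) (1 - q))"
    unfolding Psi_def by (simp add: bs_zero algebra_simps)
  ultimately show ?thesis by simp
qed

lemma dA_nonneg: "0 \<le> t \<Longrightarrow> t \<le> 1 \<Longrightarrow> 0 \<le> dA n k t"
  unfolding dA_def by simp

lemma dA_cont: "continuous_on S (dA n k)"
  unfolding dA_def by (intro continuous_intros)

theorem mainTheorem17:
  fixes F :: "real \<Rightarrow> real" and n :: nat and q :: real
  assumes "n \<ge> 2" and "cont_dist_01 F" and "0 \<le> q" and "q \<le> 1 - 1 / real n"
  shows "\<exists>k::nat. 1 \<le> k \<and> real k \<le> (1 - q) * real n \<and>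
           real n * per_agent_rev F n k \<ge> 1/4 * (real n * revenue_curve F q)"
proof -
  note n = assms(1) and F = assms(2) and q0 = assms(3) and q1 = assms(4)
  define p where "p = 1 - q"
  have nr: "real n \<ge> 2" using n by simp
  have p: "1 / real n \<le> p" "p \<le> 1" using q0 q1 by (auto simp: p_def)
  have q1': "q \<le> 1" using q1 nr by (smt (verit) divide_nonneg_nonneg of_nat_0_le_iff)
  obtain k where k: "1 \<le> k" "real k \<le> real n * p" "k < n" "Fk n k p \<le> 1"
    using exists_k[OF n p] by blast
  define v where "v = value_of_quantile F"
  define g where "g t = (1 - t) * dA n k t" for t
  have g_cont: "continuous_on S g" for S unfolding g_def by (intro continuous_intros dA_cont)
  have g_nonneg: "0 \<le> g t" if "0 \<le> t" "t \<le> 1" for t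
    unfolding g_def using dA_nonneg that by simp
  have v_b: "0 \<le> v t" "v t \<le> 1" if "0 \<le> t" for t using v_bounds[OF F that] by (auto simp: v_def)
  have v_m: "mono_on {0..1} v"
    unfolding mono_on_def v_def using v_mono[OF F] by auto
  have rev: "revenue_curve F t * deriv (alloc_topk n k) t = v t * g t" for t
  proof -
    have "deriv (alloc_topk n k) t = dA n k t" using alloc_deriv[OF k(1) k(3)] by (rule DERIV_imp_deriv)
    then show ?thesis unfolding revenue_curve_def g_def v_def by (simp add: mult_ac)
  qed
  have per: "per_agent_rev F n k = integral {0..1} (\<lambda>t. v t * g t)"
    unfolding per_agent_rev_def rev ..
  have int01: "(\<lambda>t. v t * g t) integrable_on {0..1}"
  proof -
    have "v integrable_on {0..1}" using v_m by (rule integrable_on_mono_on)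
    then have vm: "v \<in> borel_measurable (lebesgue_on {0..1})" by (rule integrable_imp_measurable)
    have vb: "bounded (v ` {0..1})"
      unfolding bounded_iff using v_b by (intro exI[of _ 1]) auto
    have "g absolutely_integrable_on {0..1}" by (intro absolutely_integrable_continuous_real g_cont)
    then have "(\<lambda>t. v t * g t) absolutely_integrable_on {0..1}"
      using absolutely_integrable_bounded_measurable_product_real[OF vm _ vb] by simp
    then show ?thesis using set_lebesgue_integral_eq_integral(1) by blast
  qed
  have intq: "(\<lambda>t. v t * g t) integrable_on {q..1}"
    by (rule integrable_on_subinterval[OF int01]) (use q0 in auto)
  have step1: "integral {q..1} (\<lambda>t. v t * g t) \<le> integral {0..1} (\<lambda>t. v t * g t)"
    using q0 intq int01 v_b g_nonneg by (intro integral_subset_le) auto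
  have hint: "((\<lambda>t. v q * g t) has_integral v q * (real k / real n * (1 - bs n (Suc k) p))) {q..1}"
    using has_integral_mult_right[OF integral_g[OF k(1) k(3) q0 q1'], of "v q"]
    unfolding g_def p_def by simp
  have step2: "integral {q..1} (\<lambda>t. v q * g t) \<le> integral {q..1} (\<lambda>t. v t * g t)"
  proof (rule integral_le)
    show "(\<lambda>t. v q * g t) integrable_on {q..1}" using hint by blast
    show "(\<lambda>t. v t * g t) integrable_on {q..1}" by (rule intq)
    fix t assume t: "t \<in> {q..1}"
    have "v q \<le> v t" using v_mono[OF F q0] t by (auto simp: v_def)
    then show "v q * g t \<le> v t * g t" using g_nonneg t q0 by (intro mult_right_mono) auto
  qed
  have step3: "v q * (real k / real n * (1 - bs n (Suc k) p)) \<ge> v q * p / 4"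
  proof -
    have kpos: "real k > 0" using k by simp
    have npos: "real n > 0" using nr by simp
    have "bs n (Suc k) p + real n * p / (4 * real k) \<le> 1" using k(4) unfolding Fk_def .
    then have "real n * p / (4 * real k) \<le> 1 - bs n (Suc k) p" by linarith
    then have "real k / real n * (real n * p / (4 * real k)) \<le> real k / real n * (1 - bs n (Suc k) p)"
      using kpos npos by (intro mult_left_mono) auto
    moreover have "real k / real n * (real n * p / (4 * real k)) = p / 4" using kpos npos by simp
    ultimately have "p / 4 \<le> real k / real n * (1 - bs n (Suc k) p)" by linarith
    then have "v q * (p / 4) \<le> v q * (real k / real n * (1 - bs n (Suc k) p))"
      using v_b[OF q0] by (intro mult_left_mono) auto
    then show ?thesis by simp
  qed
  have "revenue_curve F q / 4 \<le> per_agent_rev F n k"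
  proof -
    have "revenue_curve F q / 4 = v q * p / 4" unfolding revenue_curve_def v_def p_def by simp
    also have "\<dots> \<le> integral {q..1} (\<lambda>t. v q * g t)"
    proof -
      have "integral {q..1} (\<lambda>t. v q * g t) = v q * (real k / real n * (1 - bs n (Suc k) p))"
        using hint by (rule integral_unique)
      then show ?thesis using step3 by linarith
    qed
    also have "\<dots> \<le> per_agent_rev F n k" using step1 step2 per by linarith
    finally show ?thesis .
  qed
  then have "real n * (revenue_curve F q / 4) \<le> real n * per_agent_rev F n k"
    using nr by (intro mult_left_mono) auto
  then have "1/4 * (real n * revenue_curve F q) \<le> real n * per_agent_rev F n k" by simp
  moreover have "real k \<le> (1 - q) * real n" using k(2) by (simp add: p_def mult.commute)
  ultimately show ?thesis using k(1) by blast
qed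


end
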